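(* For a $*$-ring $R$ the following are equivalent: (1) $R$ is a generalized p.q.-Baer $*$-ring; (2) $R$ is a weakly generalized p.q.-Baer $*$-ring with unity.
   Context: A $*$-ring is a ring with an involution; a projection is $e$ with $e=e^*=e^2$. $r_R(S)=\{a\in R: sa=0\ \forall s\in S\}$. $R$ is a generalized p.q.-Baer $*$-ring if for every $x\in R$ there are $n\in\mathbb N$ and a projection $e$ with $r_R((xR)^n)=eR$. $R$ is a weakly generalized p.q.-Baer $*$-ring if for every $x\in R$ there exist a central projection $e$ and $n\in\mathbb N$ such that $x^ne=x^n$ and, for all $y\in R$, $(xR)^ny=\{0\}$ iff $ey=0$. *)

theory Defs
  imports Main
begin

definition is_involution :: "('a::ring \<Rightarrow> 'a) \<Rightarrow> bool" where
  "is_involution s \<longleftrightarrow>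
     (\<forall>x y. s (x + y) = s x + s y) \<and>
     (\<forall>x y. s (x * y) = s y * s x) \<and>
     (\<forall>x. s (s x) = x)"

definition is_projection :: "('a::ring \<Rightarrow> 'a) \<Rightarrow> 'a \<Rightarrow> bool" where
  "is_projection s e \<longleftrightarrow> e = s e \<and> e = e * e"

definition is_central :: "'a::ring \<Rightarrow> bool" where
  "is_central e \<longleftrightarrow> (\<forall>a. e * a = a * e)"

text \<open>Positive powers of an element in a (possibly non-unital) ring; rpow x n is x^(n) for n >= 1.\<close>
fun rpow :: "'a::ring \<Rightarrow> nat \<Rightarrow> 'a" where
  "rpow x 0 = 0"
| "rpow x (Suc 0) = x"
| "rpow x (Suc (Suc n)) = x * rpow x (Suc n)"

fun spow :: "'a::ring set \<Rightarrow> nat \<Rightarrow> 'a set" where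
  "spow S 0 = {0}"
| "spow S (Suc 0) = S"
| "spow S (Suc (Suc n)) = {a * b | a b. a \<in> S \<and> b \<in> spow S (Suc n)}"

definition right_ideal_gen :: "'a::ring \<Rightarrow> 'a set" where
  "right_ideal_gen x = {x * r | r. True}"

definition r_ann :: "'a::ring set \<Rightarrow> 'a set" where
  "r_ann S = {a. \<forall>s\<in>S. s * a = 0}"

definition gen_pq_baer :: "('a::ring \<Rightarrow> 'a) \<Rightarrow> bool" where
  "gen_pq_baer s \<longleftrightarrow>
     (\<forall>x. \<exists>n e. n \<ge> 1 \<and> is_projection s e \<and>
        r_ann (spow (right_ideal_gen x) n) = right_ideal_gen e)"

definition weakly_gen_pq_baer :: "('a::ring \<Rightarrow> 'a) \<Rightarrow> bool" where
  "weakly_gen_pq_baer s \<longleftrightarrow>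
     (\<forall>x. \<exists>e n. n \<ge> 1 \<and> is_projection s e \<and> is_central e \<and>
        rpow x n * e = rpow x n \<and>
        (\<forall>y. ((\<forall>a\<in>spow (right_ideal_gen x) n. a * y = 0) \<longleftrightarrow> e * y = 0)))"

definition has_unity :: "'a::ring itself \<Rightarrow> bool" where
  "has_unity _ \<longleftrightarrow> (\<exists>u::'a. \<forall>x. u * x = x \<and> x * u = x)"

end

theory Submission
  imports Defs
begin

lemma spow_zero: "z \<in> spow {0::'a::ring} n \<Longrightarrow> z = 0"
  by (induction "{0::'a}" n arbitrary: z rule: spow.induct) auto

lemma spow_right: "z \<in> spow (right_ideal_gen x) n \<Longrightarrow> z * r \<in> spow (right_ideal_gen (x::'a::ring)) n"
proof (induction "right_ideal_gen x" n arbitrary: z r rule: spow.induct)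
  case 1 then show ?case by simp
next
  case 2 then show ?case by (auto simp: right_ideal_gen_def mult.assoc)
next
  case (3 n)
  then obtain a b where "z = a * b" "a \<in> right_ideal_gen x" "b \<in> spow (right_ideal_gen x) (Suc n)" by auto
  with 3 show ?case by (auto simp: mult.assoc)
qed

lemma rpow_in: 
  assumes u: "\<forall>y. u * y = y \<and> y * (u::'a::ring) = y"
  shows "n \<ge> 1 \<Longrightarrow> rpow (x::'a) n \<in> spow (right_ideal_gen x) n"
proof (induction x n rule: rpow.induct)
  case (1 x) then show ?case by simp
next
  case (2 x) have "x = x * u" using u by simp thus ?case by (auto simp: right_ideal_gen_def)
next
  case (3 x n)
  have "x \<in> right_ideal_gen x" using u by (auto simp: right_ideal_gen_def intro!: exI[of _ u])
  with 3 show ?case by auto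
qed

theorem mainTheorem9:
  fixes s :: "'a::ring \<Rightarrow> 'a"
  assumes "is_involution s"
  shows "gen_pq_baer s \<longleftrightarrow> (weakly_gen_pq_baer s \<and> has_unity TYPE('a))"
proof
  assume G: "gen_pq_baer s"
  have sadd: "\<And>x y. s (x + y) = s x + s y" and smul: "\<And>x y. s (x * y) = s y * s x"
    and ss: "\<And>x. s (s x) = x" using assms by (auto simp: is_involution_def)
  have sdiff: "\<And>a b. s (a - b) = s a - s b"
  proof -
    fix a b have "s a = s ((a - b) + b)" by simp
    thus "s (a - b) = s a - s b" by (simp only: sadd) simp
  qed
  obtain n0 u where pu: "is_projection s u" and ru: "r_ann (spow (right_ideal_gen (0::'a)) n0) = right_ideal_gen u"
    using G unfolding gen_pq_baer_def by blast
  have "right_ideal_gen (0::'a) = {0}" by (auto simp: right_ideal_gen_def)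
  hence "r_ann (spow (right_ideal_gen (0::'a)) n0) = UNIV"
    using spow_zero by (force simp: r_ann_def)
  hence all: "\<And>a. a \<in> right_ideal_gen u" using ru by auto
  have uu: "u = s u" "u = u * u" using pu by (auto simp: is_projection_def)
  have left: "\<And>a. u * a = a"
  proof -
    fix a obtain r where "a = u * r" using all[of a] by (auto simp: right_ideal_gen_def)
    thus "u * a = a" using uu by (metis mult.assoc)
  qed
  have right: "\<And>a. a * u = a"
  proof -
    fix a have "s (u * s a) = s (s a)" using left by simp
    hence "s (s a) * s u = s (s a)" by (simp only: smul)
    thus "a * u = a" using uu(1) ss by metis
  qed
  have unit: "\<forall>y. u * y = y \<and> y * u = y" using left right by simp
  have "weakly_gen_pq_baer s" unfolding weakly_gen_pq_baer_def
  proof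
    fix x
    obtain n e where n: "n \<ge> 1" and pe: "is_projection s e"
      and re: "r_ann (spow (right_ideal_gen x) n) = right_ideal_gen e"
      using G unfolding gen_pq_baer_def by blast
    have e: "e = s e" "e = e * e" using pe by (auto simp: is_projection_def)
    have ein: "e \<in> r_ann (spow (right_ideal_gen x) n)" using re unit
      by (auto simp: right_ideal_gen_def intro!: exI[of _ u])
    have lid: "\<And>r. r * e = e * r * e"
    proof -
      fix r
      have "r * e \<in> r_ann (spow (right_ideal_gen x) n)"
        using ein spow_right by (fastforce simp: r_ann_def mult.assoc[symmetric])
      then obtain t where "r * e = e * t" using re by (auto simp: right_ideal_gen_def)
      thus "r * e = e * r * e" using e by (metis mult.assoc)
    qed
    have cen: "is_central e" unfolding is_central_def
    proof
      fix a
      have "s (s a * e) = s (e * s a * e)" using lid[of "s a"] by (rule arg_cong)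
      hence "e * a = e * a * e" using e(1)[symmetric] e(2)[symmetric] ss by (simp add: smul mult.assoc)
      moreover have "a * e = e * a * e" by (rule lid)
      ultimately show "e * a = a * e" by simp
    qed
    define f where "f = u - e"
    have sf: "s f = f" unfolding f_def
      using sdiff[of u e] uu(1)[symmetric] e(1)[symmetric] by simp
    have ff: "f = f * f" unfolding f_def using e(2)[symmetric] left right
      by (simp add: algebra_simps)
    have cf: "is_central f" using cen left right unfolding is_central_def f_def
      by (simp add: algebra_simps)
    have xe: "rpow x n * e = 0" using ein rpow_in[OF unit n] by (auto simp: r_ann_def)
    have xf: "rpow x n * f = rpow x n" unfolding f_def using xe right
      by (simp add: algebra_simps)
    have iff: "\<forall>y. (\<forall>a\<in>spow (right_ideal_gen x) n. a * y = 0) \<longleftrightarrow> f * y = 0"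
    proof
      fix y
      have "(\<forall>a\<in>spow (right_ideal_gen x) n. a * y = 0) \<longleftrightarrow> y \<in> right_ideal_gen e"
        using re by (auto simp: r_ann_def)
      also have "\<dots> \<longleftrightarrow> e * y = y"
        using e(2)[symmetric] by (auto simp: right_ideal_gen_def) (metis mult.assoc)+
      also have "\<dots> \<longleftrightarrow> f * y = 0" unfolding f_def using left
        by (auto simp: algebra_simps)
      finally show "(\<forall>a\<in>spow (right_ideal_gen x) n. a * y = 0) \<longleftrightarrow> f * y = 0" .
    qed
    show "\<exists>e n. n \<ge> 1 \<and> is_projection s e \<and> is_central e \<and>
        rpow x n * e = rpow x n \<and>
        (\<forall>y. ((\<forall>a\<in>spow (right_ideal_gen x) n. a * y = 0) \<longleftrightarrow> e * y = 0))"
    proof (intro exI conjI)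
      show "is_projection s f" unfolding is_projection_def using sf[symmetric] ff by (rule conjI)
    qed (fact n cf xf iff)+
  qed
  moreover have "has_unity TYPE('a)" using unit by (auto simp: has_unity_def)
  ultimately show "weakly_gen_pq_baer s \<and> has_unity TYPE('a)" by simp
next
  assume W: "weakly_gen_pq_baer s \<and> has_unity TYPE('a)"
  have sadd: "\<And>x y. s (x + y) = s x + s y" and smul: "\<And>x y. s (x * y) = s y * s x"
    and ss: "\<And>x. s (s x) = x" using assms by (auto simp: is_involution_def)
  have sdiff: "\<And>a b. s (a - b) = s a - s b"
  proof -
    fix a b have "s a = s ((a - b) + b)" by simp
    thus "s (a - b) = s a - s b" by (simp only: sadd) simp
  qed
  obtain u :: 'a where unit: "\<forall>y. u * y = y \<and> y * u = y" using W by (auto simp: has_unity_def)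
  have su: "s u = u"
  proof -
    have "s (s u * u) = s u * s (s u)" by (simp add: smul)
    thus ?thesis using unit ss by simp
  qed
  show "gen_pq_baer s" unfolding gen_pq_baer_def
  proof
    fix x
    obtain e n where n: "n \<ge> 1" and pe: "is_projection s e"
      and iff: "\<forall>y. ((\<forall>a\<in>spow (right_ideal_gen x) n. a * y = 0) \<longleftrightarrow> e * y = 0)"
      using W unfolding weakly_gen_pq_baer_def by blast
    have e: "e = s e" "e = e * e" using pe by (auto simp: is_projection_def)
    define f where "f = u - e"
    have sf: "s f = f" unfolding f_def
      using sdiff[of u e] su e(1)[symmetric] by simp
    have ff: "f = f * f" unfolding f_def using e(2)[symmetric] unit
      by (simp add: algebra_simps)
    have R: "r_ann (spow (right_ideal_gen x) n) = right_ideal_gen f"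
    proof (rule set_eqI)
      fix y
      have "y \<in> r_ann (spow (right_ideal_gen x) n) \<longleftrightarrow> e * y = 0" using iff by (auto simp: r_ann_def)
      also have "\<dots> \<longleftrightarrow> y \<in> right_ideal_gen f"
      proof
        assume "e * y = 0"
        hence "y = f * y" unfolding f_def using unit by (simp add: algebra_simps)
        thus "y \<in> right_ideal_gen f" by (auto simp: right_ideal_gen_def)
      next
        assume "y \<in> right_ideal_gen f"
        then obtain r where "y = f * r" by (auto simp: right_ideal_gen_def)
        hence "e * y = (e * (u - e)) * r" unfolding f_def by (simp add: mult.assoc)
        hence "e * y = (e * u - e * e) * r" by (simp only: right_diff_distrib)
        thus "e * y = 0" using unit e(2)[symmetric] by simp
      qed
      finally show "y \<in> r_ann (spow (right_ideal_gen x) n) \<longleftrightarrow> y \<in> right_ideal_gen f" .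
    qed
    show "\<exists>n e. n \<ge> 1 \<and> is_projection s e \<and> r_ann (spow (right_ideal_gen x) n) = right_ideal_gen e"
    proof (intro exI conjI)
      show "is_projection s f" unfolding is_projection_def using sf[symmetric] ff by (rule conjI)
    qed (fact n R)+
  qed
qed

end
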